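(* Consider a fixed-wing UAV with constant speed $V_g>0$ and kinematics $$\dot x_p=V_g\cos\gamma\cos\chi,\ \dot y_p=V_g\cos\gamma\sin\chi,\ \dot z_p=V_g\sin\gamma,\quad \dot\chi=\frac{a_{yc}}{V_g\cos\gamma}+d_\chi,\ \dot\gamma=\frac{a_{zc}-g\cos\gamma}{V_g}+d_\gamma,$$ with disturbances satisfying $\sqrt{d_\chi^2+d_\gamma^2}\le L_d$, tracking a virtual target $(x_c,y_c,z_c)$. Let $k_q>0$, $0<\delta<\pi/2$, and apply the modified guidance law $$a_{yc}^*=(k_q\sin\eta^{lat}+f_{lat})V_g\cos\gamma,\qquad a_{zc}^*=(k_q\sin\eta^{lon}+f_{lon})V_g+g\cos\gamma,$$ with compensation terms $f_{lat}=\dot C_1-f_\chi$, $f_{lon}=\dot C_2-f_\gamma$, where $f_\chi,f_\gamma$ are such that for some $\tau>0$, at every state with $|\eta^{lat}|\le\delta$, $|\eta^{lon}|\le\delta$ and $(\sin\eta^{lat}\cos\eta^{lat},\sin\eta^{lon}\cos\eta^{lon})\ne(0,0)$, $$\frac{f_\chi\sin\eta^{lat}\cos\eta^{lat}+f_\gamma\sin\eta^{lon}\cos\eta^{lon}}{\sqrt{\sin^2\eta^{lat}\cos^2\eta^{lat}+\sin^2\eta^{lon}\cos^2\eta^{lon}}}+L_d+\tau\le0.$$ Then along closed-loop trajectories satisfying $|\eta^{lon}|\le\delta$ and $|\eta^{lat}|\le\delta$, the look-ahead angles $\eta^{lat},\eta^{lon}$ converge to zero in finite time, with settling time bounded by 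$$T\le\frac{1}{k_q\cos\delta}\ln\!\left(1+\frac{k_q}{\tau}\sqrt{\sin^2\eta^{lon}(0)+\sin^2\eta^{lat}(0)}\right).$$
   Context: $\chi$ is the track angle, $\gamma$ the flight-path angle (with $\cos\gamma\neq0$), $g$ gravitational acceleration, $a_{yc},a_{zc}$ lateral and longitudinal acceleration commands. The line-of-sight angles are $C_1=\tan^{-1}\frac{y_c-y_p}{x_c-x_p}$ and $C_2=\tan^{-1}\frac{z_c-z_p}{\sqrt{(x_c-x_p)^2+(y_c-y_p)^2}}$, and the look-ahead angles are $\eta^{lat}=C_1-\chi$, $\eta^{lon}=C_2-\gamma$; $\dot C_1,\dot C_2$ are their time derivatives along the trajectory. No saturation of the commands is imposed in this statement. *)

theory Defs
  imports "HOL-Analysis.Analysis"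
begin

definition los_lat :: "real \<Rightarrow> real \<Rightarrow> real \<Rightarrow> real \<Rightarrow> real" where
  "los_lat xc yc xp yp = arctan ((yc - yp) / (xc - xp))"

definition los_lon :: "real \<Rightarrow> real \<Rightarrow> real \<Rightarrow> real \<Rightarrow> real \<Rightarrow> real \<Rightarrow> real" where
  "los_lon xc yc zc xp yp zp =
     arctan ((zc - zp) / sqrt ((xc - xp)^2 + (yc - yp)^2))"

end

theory Submission
  imports Defs
begin

lemma mono_helper:
  fixes f f' :: "real \<Rightarrow> real"
  assumes d: "\<And>x. s \<le> x \<Longrightarrow> x \<le> t \<Longrightarrow> (f has_real_derivative f' x) (at x within {0..})"
    and n: "\<And>x. s \<le> x \<Longrightarrow> x \<le> t \<Longrightarrow> f' x \<le> 0"
    and s: "0 \<le> s" "s \<le> t"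
  shows "f t \<le> f s"
proof (rule DERIV_nonpos_imp_decreasing_open[OF s(2)])
  fix x assume x: "s < x" "x < t"
  have "x \<in> interior {0::real..}" using x s by simp
  then have "at x within {0..} = at x" by (rule at_within_interior)
  then show "\<exists>y. DERIV f x :> y \<and> y \<le> 0" using d[of x] n[of x] x by auto
next
  have "continuous (at x within {0..}) f" if "x \<in> {s..t}" for x
    using d[of x] that by (auto intro: DERIV_continuous)
  then have "continuous_on {0..} f \<Longrightarrow> True" by simp
  show "continuous_on {s..t} f"
    unfolding continuous_on_eq_continuous_within
  proof
    fix x assume x: "x \<in> {s..t}"
    have "continuous (at x within {0..}) f" using d[of x] x by (auto intro: DERIV_continuous)
    then show "continuous (at x within {s..t}) f"
      by (rule continuous_within_subset) (use s in auto)
  qed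
qed

lemma ode_lemma:
  fixes W W' :: "real \<Rightarrow> real" and a b :: real
  assumes a: "a > 0" and b: "b > 0"
    and W0: "\<And>t. t \<ge> 0 \<Longrightarrow> W t \<ge> 0"
    and dW: "\<And>t. t \<ge> 0 \<Longrightarrow> (W has_real_derivative W' t) (at t within {0..})"
    and ineq: "\<And>t. t \<ge> 0 \<Longrightarrow> W' t \<le> - 2 * a * W t - 2 * b * sqrt (W t)"
    and T: "T = 1 / a * ln (1 + a / b * sqrt (W 0))"
  shows "T \<ge> 0 \<and> (\<forall>t\<ge>T. W t = 0)"
proof -
  have Wdec: "W t \<le> W s" if "0 \<le> s" "s \<le> t" for s t
  proof (rule mono_helper[OF dW _ that])
    fix x assume "s \<le> x" "x \<le> t"
    then have "x \<ge> 0" using that by simp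
    then have "0 \<le> a * W x" "0 \<le> b * sqrt (W x)" using W0[of x] a b by simp_all
    then show "W' x \<le> 0" using ineq[of x] \<open>x \<ge> 0\<close> by linarith
  qed (use that in auto)
  define V0 where "V0 = sqrt (W 0)"
  have V0: "V0 \<ge> 0" using W0[of 0] by (simp add: V0_def)
  have Tge: "T \<ge> 0" unfolding T using a b V0 by (simp add: V0_def)
  have eT: "exp (a * T) = 1 + a / b * V0"
  proof -
    have "1 + a / b * V0 > 0" using a b V0 by (simp add: add_pos_nonneg)
    then show ?thesis unfolding T V0_def[symmetric] using a by simp
  qed
  have ex: "\<exists>s\<in>{0..T}. W s = 0"
  proof (rule ccontr)
    assume "\<not> ?thesis"
    then have pos: "\<And>s. 0 \<le> s \<Longrightarrow> s \<le> T \<Longrightarrow> W s > 0"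
      using W0 by force
    define G where "G t = sqrt (W t) * exp (a * t) + b / a * (exp (a * t) - 1)" for t
    define G' where "G' t = exp (a * t) * (W' t / (2 * sqrt (W t)) + a * sqrt (W t) + b)" for t
    have "G T \<le> G 0"
    proof (rule mono_helper[of 0 T G G'])
      fix x assume x: "0 \<le> x" "x \<le> T"
      have Wp: "W x > 0" using pos x by simp
      have dV: "((\<lambda>t. sqrt (W t)) has_real_derivative inverse (sqrt (W x)) / 2 * W' x) (at x within {0..})"
        by (rule DERIV_chain2[OF DERIV_real_sqrt[OF Wp] dW]) (use x in simp)
      show "(G has_real_derivative G' x) (at x within {0..})"
      proof -
        have dE: "((\<lambda>t. exp (a*t)) has_real_derivative a * exp(a*x)) (at x within {0..})"
          by (auto intro!: derivative_eq_intros)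
        note DERIV_add[OF DERIV_mult[OF dV dE] DERIV_cmult[OF DERIV_diff[OF dE DERIV_const]], of "b/a" 1]
        then show ?thesis unfolding G_def[abs_def]
          by (rule DERIV_cong) (use Wp a in \<open>simp add: G'_def field_simps\<close>)
      qed
      have "W' x / (2 * sqrt (W x)) + a * sqrt (W x) + b \<le> 0"
      proof -
        have sq: "sqrt (W x) > 0" using Wp by simp
        have e: "sqrt (W x) * sqrt (W x) = W x" using Wp by simp
        have "- 2 * sqrt (W x) * (a * sqrt (W x) + b) = - 2 * a * (sqrt (W x) * sqrt (W x)) - 2 * b * sqrt (W x)"
          by (simp add: algebra_simps)
        also have "\<dots> = - 2 * a * W x - 2 * b * sqrt (W x)" by (simp only: e)
        finally have "W' x \<le> - 2 * sqrt (W x) * (a * sqrt (W x) + b)" using ineq x by simp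
        then have "W' x \<le> (- (a * sqrt (W x) + b)) * (2 * sqrt (W x))"
          by (simp add: algebra_simps)
        then have "W' x / (2 * sqrt (W x)) \<le> - (a * sqrt (W x) + b)"
          using sq by (simp add: pos_divide_le_eq)
        then show ?thesis by simp
      qed
      then show "G' x \<le> 0" unfolding G'_def by (simp add: mult_nonneg_nonpos)
    qed (use Tge in auto)
    moreover have "G 0 = V0" by (simp add: G_def V0_def)
    moreover have "G T = sqrt (W T) * exp (a * T) + V0"
      unfolding G_def eT using a b by (simp add: field_simps)
    ultimately have "sqrt (W T) * exp (a * T) \<le> 0" by simp
    moreover have "sqrt (W T) * exp (a * T) > 0" using pos[of T] Tge by simp
    ultimately show False by simp
  qed
  then obtain s where s: "0 \<le> s" "s \<le> T" "W s = 0" by auto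
  show ?thesis
  proof (intro conjI allI impI Tge)
    fix t assume "t \<ge> T"
    then show "W t = 0" using Wdec[of s t] W0[of t] s by simp
  qed
qed

lemma cos_ge_delta:
  fixes e \<delta> :: real
  assumes "\<bar>e\<bar> \<le> \<delta>" "\<delta> < pi / 2"
  shows "cos \<delta> \<le> cos e"
proof -
  have "cos \<delta> \<le> cos \<bar>e\<bar>" by (rule cos_monotone_0_pi_le) (use assms in auto)
  then show ?thesis by simp
qed

lemma cs_ineq:
  fixes d1 d2 p1 p2 :: real
  shows "- (sqrt (d1^2 + d2^2) * sqrt (p1^2 + p2^2)) \<le> d1 * p1 + d2 * p2"
proof -
  have "(d1 * p1 + d2 * p2)^2 \<le> (d1^2 + d2^2) * (p1^2 + p2^2)"
  proof -
    have "(d1^2 + d2^2) * (p1^2 + p2^2) - (d1 * p1 + d2 * p2)^2 = (d1 * p2 - d2 * p1)^2"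
      by (simp add: power2_eq_square algebra_simps)
    then show ?thesis using zero_le_power2[of "d1 * p2 - d2 * p1"] by linarith
  qed
  then have "sqrt ((d1 * p1 + d2 * p2)^2) \<le> sqrt ((d1^2 + d2^2) * (p1^2 + p2^2))"
    using real_sqrt_le_mono by blast
  then have "\<bar>d1 * p1 + d2 * p2\<bar> \<le> sqrt (d1^2 + d2^2) * sqrt (p1^2 + p2^2)"
    by (simp add: real_sqrt_mult)
  then show ?thesis by linarith
qed

lemma key_ineq:
  fixes e1 e2 f1 f2 d1 d2 k L \<tau> \<delta> :: real
  assumes e1: "\<bar>e1\<bar> \<le> \<delta>" and e2: "\<bar>e2\<bar> \<le> \<delta>" and \<delta>: "0 < \<delta>" "\<delta> < pi / 2"
    and k: "k > 0" and \<tau>: "\<tau> > 0" and L: "sqrt (d1^2 + d2^2) \<le> L"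
    and f: "(sin e1 * cos e1, sin e2 * cos e2) \<noteq> (0, 0) \<longrightarrow>
        (f1 * (sin e1 * cos e1) + f2 * (sin e2 * cos e2))
          / sqrt ((sin e1)^2 * (cos e1)^2 + (sin e2)^2 * (cos e2)^2) + L + \<tau> \<le> 0"
  shows "2 * sin e2 * cos e2 * (- k * sin e2 + f2 - d2) + 2 * sin e1 * cos e1 * (- k * sin e1 + f1 - d1)
     \<le> - 2 * (k * cos \<delta>) * ((sin e2)^2 + (sin e1)^2) - 2 * (\<tau> * cos \<delta>) * sqrt ((sin e2)^2 + (sin e1)^2)"
proof -
  define s1 where "s1 = sin e1"
  define c1 where "c1 = cos e1"
  define s2 where "s2 = sin e2"
  define c2 where "c2 = cos e2"
  define cd where "cd = cos \<delta>"
  have cd: "cd > 0" unfolding cd_def using \<delta> by (intro cos_gt_zero_pi) auto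
  have c1: "c1 \<ge> cd" unfolding s1_def c1_def s2_def c2_def cd_def using cos_ge_delta[OF e1 \<delta>(2)] .
  have c2: "c2 \<ge> cd" unfolding s1_def c1_def s2_def c2_def cd_def using cos_ge_delta[OF e2 \<delta>(2)] .
  define p1 where "p1 = s1 * c1"
  define p2 where "p2 = s2 * c2"
  define N where "N = sqrt (p1^2 + p2^2)"
  define V where "V = sqrt (s2^2 + s1^2)"
  have "0 \<le> sqrt (d1^2 + d2^2)" by simp
  then have L0: "L \<ge> 0" using L by linarith
  show ?thesis
  proof (cases "p1 = 0 \<and> p2 = 0")
    case True
    then have "s1 = 0" "s2 = 0" using c1 c2 cd unfolding p1_def p2_def by auto
    then show ?thesis unfolding s1_def c1_def s2_def c2_def cd_def by simp
  next
    case False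
    have f': "(f1 * p1 + f2 * p2) / N + L + \<tau> \<le> 0"
    proof -
      have ne: "(sin e1 * cos e1, sin e2 * cos e2) \<noteq> (0,0)" using False
        unfolding p1_def p2_def s1_def c1_def s2_def c2_def by simp
      show ?thesis using mp[OF f ne]
        unfolding N_def p1_def p2_def s1_def c1_def s2_def c2_def by (simp only: power_mult_distrib)
    qed
    have Npos: "N > 0" unfolding N_def using False
      by (metis add_nonneg_nonneg le_less real_sqrt_gt_0_iff sum_power2_eq_zero_iff zero_le_power2)
    have P: "f1 * p1 + f2 * p2 \<le> - (L + \<tau>) * N"
    proof -
      have "(f1 * p1 + f2 * p2) / N \<le> - (L + \<tau>)" using f' by linarith
      then show ?thesis using Npos by (simp add: divide_le_eq)
    qed
    have Q: "- (L * N) \<le> d1 * p1 + d2 * p2"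
    proof -
      have "sqrt (d1^2 + d2^2) * N \<le> L * N" using L Npos by (simp add: mult_right_mono)
      then show ?thesis using cs_ineq[of d1 d2 p1 p2] unfolding N_def by linarith
    qed
    have quad: "cd * (s2^2 + s1^2) \<le> s2^2 * c2 + s1^2 * c1"
    proof -
      have "cd * s2^2 \<le> c2 * s2^2" by (rule mult_right_mono) (use c2 in auto)
      moreover have "cd * s1^2 \<le> c1 * s1^2" by (rule mult_right_mono) (use c1 in auto)
      ultimately show ?thesis by (simp only: distrib_left mult.commute[of _ "s1^2"] mult.commute[of _ "s2^2"])
    qed
    have NV: "cd * V \<le> N"
    proof -
      have "cd^2 \<le> c1^2" by (rule power_mono) (use c1 cd in auto)
      then have 1: "cd^2 * s1^2 \<le> c1^2 * s1^2" by (rule mult_right_mono) simp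
      have "cd^2 \<le> c2^2" by (rule power_mono) (use c2 cd in auto)
      then have 2: "cd^2 * s2^2 \<le> c2^2 * s2^2" by (rule mult_right_mono) simp
      have "p1^2 + p2^2 = c1^2 * s1^2 + c2^2 * s2^2" unfolding p1_def p2_def
        by (simp add: power_mult_distrib)
      then have "cd^2 * (s2^2 + s1^2) \<le> p1^2 + p2^2" using 1 2
        by (simp add: distrib_left)
      then have "sqrt (cd^2 * (s2^2 + s1^2)) \<le> N" unfolding N_def using real_sqrt_le_mono by blast
      then show ?thesis using cd by (simp add: real_sqrt_mult V_def)
    qed
    have "2 * s2 * c2 * (- k * s2 + f2 - d2) + 2 * s1 * c1 * (- k * s1 + f1 - d1)
        = 2 * (- k * (s2^2 * c2 + s1^2 * c1) + (f1 * p1 + f2 * p2) - (d1 * p1 + d2 * p2))"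
      unfolding p1_def p2_def by (simp add: algebra_simps power2_eq_square)
    also have "\<dots> \<le> 2 * (- k * (cd * (s2^2 + s1^2)) - \<tau> * N)"
    proof -
      have "k * (cd * (s2^2 + s1^2)) \<le> k * (s2^2 * c2 + s1^2 * c1)" using quad k by (simp add: mult_left_mono)
      then show ?thesis using P Q L0 by (simp add: algebra_simps)
    qed
    also have "\<dots> \<le> 2 * (- k * (cd * (s2^2 + s1^2)) - \<tau> * (cd * V))"
      using NV \<tau> by (simp add: mult_left_mono)
    finally show ?thesis unfolding V_def s1_def c1_def s2_def c2_def cd_def by (simp add: algebra_simps)
  qed
qed
theorem theorem3:
  fixes Vg g kq \<delta> \<tau> Ld :: real
    and xp yp zp chi \<gamma> xc yc zc dchi dgam ayc azc fchi fgam dC1 dC2 :: "real \<Rightarrow> real"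
  assumes Vg: "Vg > 0" and g: "g > 0"
    and kq: "kq > 0" and \<delta>: "0 < \<delta>" "\<delta> < pi / 2" and \<tau>: "\<tau> > 0"
    \<comment> \<open>kinematics on t \<ge> 0\<close>
    and cos_gamma: "\<And>t. t \<ge> 0 \<Longrightarrow> cos (\<gamma> t) \<noteq> 0"
    and dxp: "\<And>t. t \<ge> 0 \<Longrightarrow> (xp has_real_derivative Vg * cos (\<gamma> t) * cos (chi t)) (at t within {0 ..})"
    and dyp: "\<And>t. t \<ge> 0 \<Longrightarrow> (yp has_real_derivative Vg * cos (\<gamma> t) * sin (chi t)) (at t within {0 ..})"
    and dzp: "\<And>t. t \<ge> 0 \<Longrightarrow> (zp has_real_derivative Vg * sin (\<gamma> t)) (at t within {0 ..})"
    and dchi: "\<And>t. t \<ge> 0 \<Longrightarrow>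
       (chi has_real_derivative ayc t / (Vg * cos (\<gamma> t)) + dchi t) (at t within {0 ..})"
    and dgamma: "\<And>t. t \<ge> 0 \<Longrightarrow>
       (\<gamma> has_real_derivative (azc t - g * cos (\<gamma> t)) / Vg + dgam t) (at t within {0 ..})"
    \<comment> \<open>bounded disturbances\<close>
    and dist: "\<And>t. t \<ge> 0 \<Longrightarrow> sqrt ((dchi t)^2 + (dgam t)^2) \<le> Ld"
    \<comment> \<open>time derivatives of the line-of-sight angles along the trajectory\<close>
    and dC1: "\<And>t. t \<ge> 0 \<Longrightarrow>
       ((\<lambda>s. los_lat (xc s) (yc s) (xp s) (yp s)) has_real_derivative dC1 t) (at t within {0 ..})"
    and dC2: "\<And>t. t \<ge> 0 \<Longrightarrow>
       ((\<lambda>s. los_lon (xc s) (yc s) (zc s) (xp s) (yp s) (zp s)) has_real_derivative dC2 t) (at t within {0 ..})"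
    \<comment> \<open>modified guidance law with f_lat = dC1 - fchi, f_lon = dC2 - fgam\<close>
    and law_lat: "\<And>t. t \<ge> 0 \<Longrightarrow>
       ayc t = (kq * sin (los_lat (xc t) (yc t) (xp t) (yp t) - chi t) + (dC1 t - fchi t))
               * Vg * cos (\<gamma> t)"
    and law_lon: "\<And>t. t \<ge> 0 \<Longrightarrow>
       azc t = (kq * sin (los_lon (xc t) (yc t) (zc t) (xp t) (yp t) (zp t) - \<gamma> t) + (dC2 t - fgam t))
               * Vg + g * cos (\<gamma> t)"
    \<comment> \<open>condition on the compensation terms\<close>
    and fcond: "\<And>t. t \<ge> 0 \<Longrightarrow>
       (let el = los_lat (xc t) (yc t) (xp t) (yp t) - chi t;
            eo = los_lon (xc t) (yc t) (zc t) (xp t) (yp t) (zp t) - \<gamma> t in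
        \<bar>el\<bar> \<le> \<delta> \<longrightarrow> \<bar>eo\<bar> \<le> \<delta> \<longrightarrow>
        (sin el * cos el, sin eo * cos eo) \<noteq> (0, 0) \<longrightarrow>
        (fchi t * (sin el * cos el) + fgam t * (sin eo * cos eo))
          / sqrt ((sin el)^2 * (cos el)^2 + (sin eo)^2 * (cos eo)^2) + Ld + \<tau> \<le> 0)"
    \<comment> \<open>the trajectory stays in the region |\<eta>| \<le> \<delta>\<close>
    and region_lat: "\<And>t. t \<ge> 0 \<Longrightarrow> \<bar>los_lat (xc t) (yc t) (xp t) (yp t) - chi t\<bar> \<le> \<delta>"
    and region_lon: "\<And>t. t \<ge> 0 \<Longrightarrow>
       \<bar>los_lon (xc t) (yc t) (zc t) (xp t) (yp t) (zp t) - \<gamma> t\<bar> \<le> \<delta>"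
  shows "\<exists>T\<ge>0.
     T \<le> 1 / (kq * cos \<delta>) * ln (1 + kq / \<tau> *
            sqrt ((sin (los_lon (xc 0) (yc 0) (zc 0) (xp 0) (yp 0) (zp 0) - \<gamma> 0))^2
                + (sin (los_lat (xc 0) (yc 0) (xp 0) (yp 0) - chi 0))^2))
     \<and> (\<forall>t\<ge>T. los_lat (xc t) (yc t) (xp t) (yp t) - chi t = 0
              \<and> los_lon (xc t) (yc t) (zc t) (xp t) (yp t) (zp t) - \<gamma> t = 0)"
  proof -
  define el where "el t = los_lat (xc t) (yc t) (xp t) (yp t) - chi t" for t
  define eo where "eo t = los_lon (xc t) (yc t) (zc t) (xp t) (yp t) (zp t) - \<gamma> t" for t
  define W where "W t = (sin (eo t))^2 + (sin (el t))^2" for t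
  define Del where "Del t = - kq * sin (el t) + fchi t - dchi t" for t
  define Deo where "Deo t = - kq * sin (eo t) + fgam t - dgam t" for t
  define W' where "W' t = 2 * sin (eo t) * cos (eo t) * Deo t + 2 * sin (el t) * cos (el t) * Del t" for t
  have del: "(el has_real_derivative Del t) (at t within {0..})" if t: "t \<ge> 0" for t
  proof -
    have "(el has_real_derivative dC1 t - (ayc t / (Vg * cos (\<gamma> t)) + dchi t)) (at t within {0..})"
      unfolding el_def[abs_def] by (rule DERIV_diff[OF dC1[OF t] dchi[OF t]])
    moreover have "ayc t / (Vg * cos (\<gamma> t)) = kq * sin (el t) + (dC1 t - fchi t)"
      using law_lat[OF t] cos_gamma[OF t] Vg by (simp add: el_def)
    then have "dC1 t - (ayc t / (Vg * cos (\<gamma> t)) + dchi t) = Del t" by (simp add: Del_def)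
    ultimately show ?thesis by (rule DERIV_cong)
  qed
  have deo: "(eo has_real_derivative Deo t) (at t within {0..})" if t: "t \<ge> 0" for t
  proof -
    have "(eo has_real_derivative dC2 t - ((azc t - g * cos (\<gamma> t)) / Vg + dgam t)) (at t within {0..})"
      unfolding eo_def[abs_def] by (rule DERIV_diff[OF dC2[OF t] dgamma[OF t]])
    moreover have "(azc t - g * cos (\<gamma> t)) / Vg = kq * sin (eo t) + (dC2 t - fgam t)"
      using law_lon[OF t] Vg by (simp add: eo_def)
    then have "dC2 t - ((azc t - g * cos (\<gamma> t)) / Vg + dgam t) = Deo t" by (simp add: Deo_def)
    ultimately show ?thesis by (rule DERIV_cong)
  qed
  have dW: "(W has_real_derivative W' t) (at t within {0..})" if t: "t \<ge> 0" for t
  proof -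
    have s1: "((\<lambda>t. sin (eo t)) has_real_derivative cos (eo t) * Deo t) (at t within {0..})"
      by (rule DERIV_chain2[OF DERIV_sin deo[OF t]])
    have s2: "((\<lambda>t. sin (el t)) has_real_derivative cos (el t) * Del t) (at t within {0..})"
      by (rule DERIV_chain2[OF DERIV_sin del[OF t]])
    note DERIV_add[OF DERIV_power[OF s1, of 2] DERIV_power[OF s2, of 2]]
    then show ?thesis unfolding W_def[abs_def]
      by (rule DERIV_cong) (simp add: W'_def)
  qed
  have ineq: "W' t \<le> - 2 * (kq * cos \<delta>) * W t - 2 * (\<tau> * cos \<delta>) * sqrt (W t)" if t: "t \<ge> 0" for t
  proof -
    have f: "(sin (el t) * cos (el t), sin (eo t) * cos (eo t)) \<noteq> (0, 0) \<longrightarrow>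
        (fchi t * (sin (el t) * cos (el t)) + fgam t * (sin (eo t) * cos (eo t)))
          / sqrt ((sin (el t))^2 * (cos (el t))^2 + (sin (eo t))^2 * (cos (eo t))^2) + Ld + \<tau> \<le> 0"
      using fcond[OF t] region_lat[OF t] region_lon[OF t] unfolding Let_def el_def eo_def by blast
    have r1: "\<bar>el t\<bar> \<le> \<delta>" using region_lat[OF t] by (simp add: el_def)
    have r2: "\<bar>eo t\<bar> \<le> \<delta>" using region_lon[OF t] by (simp add: eo_def)
    show ?thesis
      using key_ineq[OF r1 r2 \<delta> kq \<tau> dist[OF t] f]
      unfolding W'_def W_def Deo_def Del_def .
  qed
  have cd: "cos \<delta> > 0" using \<delta> by (intro cos_gt_zero_pi) auto
  define T where "T = 1 / (kq * cos \<delta>) * ln (1 + (kq * cos \<delta>) / (\<tau> * cos \<delta>) * sqrt (W 0))"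
  have W0: "W t \<ge> 0" for t unfolding W_def by simp
  have res: "T \<ge> 0 \<and> (\<forall>t\<ge>T. W t = 0)"
    by (rule ode_lemma[of "kq * cos \<delta>" "\<tau> * cos \<delta>" W W' T])
       (use kq \<tau> cd W0 dW ineq T_def in auto)
  have Teq: "T = 1 / (kq * cos \<delta>) * ln (1 + kq / \<tau> *
            sqrt ((sin (los_lon (xc 0) (yc 0) (zc 0) (xp 0) (yp 0) (zp 0) - \<gamma> 0))^2
                + (sin (los_lat (xc 0) (yc 0) (xp 0) (yp 0) - chi 0))^2))"
    unfolding T_def W_def el_def eo_def using cd by simp
  show ?thesis
  proof (intro exI conjI allI impI)
    show "T \<ge> 0" using res by simp
    show "T \<le> 1 / (kq * cos \<delta>) * ln (1 + kq / \<tau> *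
            sqrt ((sin (los_lon (xc 0) (yc 0) (zc 0) (xp 0) (yp 0) (zp 0) - \<gamma> 0))^2
                + (sin (los_lat (xc 0) (yc 0) (xp 0) (yp 0) - chi 0))^2))"
      using Teq by simp
    fix t assume tT: "T \<le> t"
    then have t: "t \<ge> 0" using res by simp
    have "W t = 0" using res tT by simp
    then have z: "sin (eo t) = 0" "sin (el t) = 0" unfolding W_def
      by (simp_all add: add_nonneg_eq_0_iff)
    have r1: "\<bar>el t\<bar> \<le> \<delta>" using region_lat[OF t] by (simp add: el_def)
    have r2: "\<bar>eo t\<bar> \<le> \<delta>" using region_lon[OF t] by (simp add: eo_def)
    have "el t = 0" by (rule sin_eq_0_pi[OF _ _ z(2)]) (use r1 \<delta> pi_gt3 in auto)
    moreover have "eo t = 0" by (rule sin_eq_0_pi[OF _ _ z(1)]) (use r2 \<delta> pi_gt3 in auto)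
    ultimately show "los_lat (xc t) (yc t) (xp t) (yp t) - chi t = 0"
       "los_lon (xc t) (yc t) (zc t) (xp t) (yp t) (zp t) - \<gamma> t = 0"
      unfolding el_def eo_def by simp_all
  qed
qed

end
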